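(* In the UDoG template described in the context, let $c>0$ and $t\ge0$. If $\eta_{x,t}\le\frac{\bar r_t}{c\,\alpha_t\|m_t\|}$, $\eta_{y,t}\le\frac{\bar r_t}{c\,\alpha_t\|g_t-m_t\|}$ and $\eta_{y,t}\le\eta_{x,t}$, then \[ \|x_{t+1}-y_t\|\le\frac{\bar r_t}{c},\quad\|y_{t+1}-y_t\|\le\frac{2\bar r_t}{c},\quad\|x_{t+1}-y_{t+1}\|\le\frac{2\bar r_t}{c},\quad\bar r_{t+1}\le\bar r_t\left(1+\frac2c\right). \]
   Context: Norms are Euclidean, $\Pi_{\mathcal K}$ is Euclidean projection onto a closed convex set $\mathcal K\subseteq\mathbb R^n$; $\mathcal O$ is a stochastic gradient oracle for a function on $\mathcal K$. UDoG template: given $x_0\in\mathcal K$, $r_\epsilon>0$, set $y_0=x_0$; for $t=0,1,\dots$: $\bar r_t=\max_{k\le t}\max\{\|y_k-x_0\|,\|x_k-x_0\|,r_\epsilon\}$, $\alpha_t=\sum_{k=0}^t\bar r_k/\bar r_t$, $w_t=\alpha_t\bar r_t$; $\bar z_t=\frac{w_ty_t+\sum_{k=0}^{t-1}w_kx_{k+1}}{\sum_{k=0}^tw_k}$, $m_t\sim\mathcal O(\bar z_t)$, $x_{t+1}=\Pi_{\mathcal K}(y_t-\alpha_t\eta_{x,t}m_t)$; $\bar x_t=\frac{\sum_{k=0}^tw_kx_{k+1}}{\sum_{k=0}^tw_k}$, $g_t\sim\mathcal O(\bar x_t)$, $y_{t+1}=\Pi_{\mathcal K}(y_t-\alpha_t\eta_{y,t}g_t)$,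 with positive step sizes $\eta_{x,t},\eta_{y,t}$. *)

theory Defs
  imports "HOL-Analysis.Analysis"
begin

definition udog_rbar :: "'a::real_normed_vector \<Rightarrow> real \<Rightarrow> (nat \<Rightarrow> 'a) \<Rightarrow> (nat \<Rightarrow> 'a) \<Rightarrow> nat \<Rightarrow> real" where
  "udog_rbar x0 reps x y t =
     Max ((\<lambda>k. max (max (norm (y k - x0)) (norm (x k - x0))) reps) ` {..t})"

definition udog_alpha :: "'a::real_normed_vector \<Rightarrow> real \<Rightarrow> (nat \<Rightarrow> 'a) \<Rightarrow> (nat \<Rightarrow> 'a) \<Rightarrow> nat \<Rightarrow> real" where
  "udog_alpha x0 reps x y t = (\<Sum>k\<le>t. udog_rbar x0 reps x y k) / udog_rbar x0 reps x y t"

definition udog_w :: "'a::real_normed_vector \<Rightarrow> real \<Rightarrow> (nat \<Rightarrow> 'a) \<Rightarrow> (nat \<Rightarrow> 'a) \<Rightarrow> nat \<Rightarrow> real" where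
  "udog_w x0 reps x y t = udog_alpha x0 reps x y t * udog_rbar x0 reps x y t"

definition udog_zbar :: "'a::real_normed_vector \<Rightarrow> real \<Rightarrow> (nat \<Rightarrow> 'a) \<Rightarrow> (nat \<Rightarrow> 'a) \<Rightarrow> nat \<Rightarrow> 'a" where
  "udog_zbar x0 reps x y t =
     (1 / (\<Sum>k\<le>t. udog_w x0 reps x y k)) *\<^sub>R
       (udog_w x0 reps x y t *\<^sub>R y t + (\<Sum>k<t. udog_w x0 reps x y k *\<^sub>R x (Suc k)))"

definition udog_xbar :: "'a::real_normed_vector \<Rightarrow> real \<Rightarrow> (nat \<Rightarrow> 'a) \<Rightarrow> (nat \<Rightarrow> 'a) \<Rightarrow> nat \<Rightarrow> 'a" where
  "udog_xbar x0 reps x y t =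
     (1 / (\<Sum>k\<le>t. udog_w x0 reps x y k)) *\<^sub>R (\<Sum>k\<le>t. udog_w x0 reps x y k *\<^sub>R x (Suc k))"

end

theory Submission
  imports Defs
begin

theorem lemma19:
  fixes K :: "'a::euclidean_space set"
    and x0 :: 'a and reps c :: real and t :: nat
    and x y m g :: "nat \<Rightarrow> 'a" and etax etay :: "nat \<Rightarrow> real"
  assumes K: "closed K" "convex K" and x0K: "x0 \<in> K"
    and reps: "reps > 0"
    and init: "x 0 = x0" "y 0 = x0"
    and eta_pos: "\<And>s. etax s > 0" "\<And>s. etay s > 0"
    and x_step: "\<And>s. x (Suc s) = closest_point K (y s - (udog_alpha x0 reps x y s * etax s) *\<^sub>R m s)"
    and y_step: "\<And>s. y (Suc s) = closest_point K (y s - (udog_alpha x0 reps x y s * etay s) *\<^sub>R g s)"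
    and c: "c > 0"
    and hx: "etax t * (c * udog_alpha x0 reps x y t * norm (m t)) \<le> udog_rbar x0 reps x y t"
    and hy: "etay t * (c * udog_alpha x0 reps x y t * norm (g t - m t)) \<le> udog_rbar x0 reps x y t"
    and hxy: "etay t \<le> etax t"
  shows "norm (x (Suc t) - y t) \<le> udog_rbar x0 reps x y t / c
       \<and> norm (y (Suc t) - y t) \<le> 2 * udog_rbar x0 reps x y t / c
       \<and> norm (x (Suc t) - y (Suc t)) \<le> 2 * udog_rbar x0 reps x y t / c
       \<and> udog_rbar x0 reps x y (Suc t) \<le> udog_rbar x0 reps x y t * (1 + 2 / c)"
proof -
  define R where "R = udog_rbar x0 reps x y t"
  define a where "a = udog_alpha x0 reps x y t"
  define P where "P = closest_point K"
  have Kne: "K \<noteq> {}" using x0K by auto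
  have lip: "norm (P u - P v) \<le> norm (u - v)" for u v
    using closest_point_lipschitz[OF K(2) K(1) Kne, of u v] by (simp add: P_def dist_norm)
  have yK: "y t \<in> K"
  proof (cases t)
    case 0 then show ?thesis using init x0K by simp
  next
    case (Suc s) then show ?thesis using y_step[of s] closest_point_in_set[OF K(1) Kne] by simp
  qed
  have Py: "P (y t) = y t" using yK closest_point_self by (simp add: P_def)
  have fin: "finite ((\<lambda>k. max (max (norm (y k - x0)) (norm (x k - x0))) reps) ` {..t})" by simp
  have ny: "norm (y t - x0) \<le> R" and Rpos: "R \<ge> reps"
    unfolding R_def udog_rbar_def
    using Max_ge[OF fin, of "max (max (norm (y t - x0)) (norm (x t - x0))) reps"] by auto
  have R0: "R > 0" using Rpos reps by simp
  have "(\<Sum>k\<le>t. udog_rbar x0 reps x y k) > 0"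
  proof -
    have "udog_rbar x0 reps x y k > 0" for k
    proof -
      have fk: "finite ((\<lambda>k. max (max (norm (y k - x0)) (norm (x k - x0))) reps) ` {..k})" by simp
      show ?thesis unfolding udog_rbar_def
        using Max_ge[OF fk, of "max (max (norm (y k - x0)) (norm (x k - x0))) reps"] reps by auto
    qed
    then show ?thesis by (intro sum_pos) auto
  qed
  then have a0: "a > 0" unfolding a_def udog_alpha_def using R0 R_def by simp
  have ex: "etax t > 0" "etay t > 0" using eta_pos by auto
  have b1: "a * etax t * norm (m t) \<le> R / c"
    using hx c by (simp add: R_def a_def field_simps)
  have b2: "a * etay t * norm (g t - m t) \<le> R / c"
    using hy c by (simp add: R_def a_def field_simps)
  have b3: "a * etay t * norm (m t) \<le> a * etax t * norm (m t)"
    using hxy a0 by (intro mult_right_mono mult_left_mono) auto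
  have xs: "x (Suc t) = P (y t - (a * etax t) *\<^sub>R m t)" using x_step by (simp add: P_def a_def)
  have ys: "y (Suc t) = P (y t - (a * etay t) *\<^sub>R g t)" using y_step by (simp add: P_def a_def)
  have 1: "norm (x (Suc t) - y t) \<le> R / c"
  proof -
    have "norm (x (Suc t) - y t) \<le> norm ((a * etax t) *\<^sub>R m t)"
      using lip[of "y t - (a * etax t) *\<^sub>R m t" "y t"] xs Py by simp
    also have "\<dots> = a * etax t * norm (m t)" using a0 ex by simp
    finally show ?thesis using b1 by simp
  qed
  have 2: "norm (y (Suc t) - y t) \<le> 2 * R / c"
  proof -
    have "norm (y (Suc t) - y t) \<le> norm ((a * etay t) *\<^sub>R g t)"
      using lip[of "y t - (a * etay t) *\<^sub>R g t" "y t"] ys Py by simp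
    also have "\<dots> = a * etay t * norm ((g t - m t) + m t)" using a0 ex by simp
    also have "\<dots> \<le> a * etay t * (norm (g t - m t) + norm (m t))"
      using a0 ex by (intro mult_left_mono norm_triangle_ineq) auto
    also have "\<dots> = a * etay t * norm (g t - m t) + a * etay t * norm (m t)" by (simp add: algebra_simps)
    finally show ?thesis using b1 b2 b3 by simp
  qed
  have 3: "norm (x (Suc t) - y (Suc t)) \<le> 2 * R / c"
  proof -
    have "norm (x (Suc t) - y (Suc t)) \<le> norm ((a * etay t) *\<^sub>R g t - (a * etax t) *\<^sub>R m t)"
      using lip[of "y t - (a * etax t) *\<^sub>R m t" "y t - (a * etay t) *\<^sub>R g t"] xs ys
      by (simp add: algebra_simps)
    also have "(a * etay t) *\<^sub>R g t - (a * etax t) *\<^sub>R m t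
        = (a * etay t) *\<^sub>R (g t - m t) - (a * (etax t - etay t)) *\<^sub>R m t"
      by (simp add: algebra_simps)
    also have "norm \<dots> \<le> norm ((a * etay t) *\<^sub>R (g t - m t)) + norm ((a * (etax t - etay t)) *\<^sub>R m t)"
      by (rule norm_triangle_ineq4)
    also have "\<dots> = a * etay t * norm (g t - m t) + a * (etax t - etay t) * norm (m t)"
      using a0 ex hxy by simp
    also have "\<dots> \<le> a * etay t * norm (g t - m t) + a * etax t * norm (m t)"
      using a0 ex hxy by (intro add_left_mono mult_right_mono mult_left_mono) auto
    finally show ?thesis using b1 b2 by simp
  qed
  have 4: "udog_rbar x0 reps x y (Suc t) \<le> R * (1 + 2 / c)"
  proof -
    have eq: "udog_rbar x0 reps x y (Suc t) = max (max (max (norm (y (Suc t) - x0)) (norm (x (Suc t) - x0))) reps) R"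
      unfolding R_def udog_rbar_def atMost_Suc image_insert
      by (subst Max_insert) auto
    have "norm (y (Suc t) - x0) \<le> norm (y (Suc t) - y t) + norm (y t - x0)"
      using norm_triangle_ineq[of "y (Suc t) - y t" "y t - x0"] by simp
    then have e1: "norm (y (Suc t) - x0) \<le> R * (1 + 2 / c)" using 2 ny by (simp add: field_simps)
    have "norm (x (Suc t) - x0) \<le> norm (x (Suc t) - y t) + norm (y t - x0)"
      using norm_triangle_ineq[of "x (Suc t) - y t" "y t - x0"] by simp
    moreover have "R / c \<le> 2 * R / c" using R0 c by (simp add: divide_right_mono)
    ultimately have e2: "norm (x (Suc t) - x0) \<le> R * (1 + 2 / c)" using 1 ny by (simp add: field_simps)
    have e3: "R \<le> R * (1 + 2 / c)" using R0 c by simp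
    show ?thesis unfolding eq using e1 e2 e3 Rpos by simp
  qed
  show ?thesis using 1 2 3 4 unfolding R_def by simp
qed

end
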